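(* Let $G \ge 2$ be an integer and $p_t \in (0,1)$. Let $r_{t,1},\dots,r_{t,G}$ be i.i.d. $\mathrm{Bernoulli}(p_t)$ random variables, let $R=\sum_{j=1}^G r_{t,j}$, $\hat p_t = R/G$, and for $i\in[G]$ let $\hat A_{t,i} = r_{t,i}-\hat p_t$ and $A_{t,i} = r_{t,i}-p_t$. Let $\mathcal S=\{1\le R\le G-1\}$. Then for every $i\in[G]$: $\mathbb E[\hat A_{t,i}-A_{t,i}\mid \mathcal S] < 0$ if $p_t<1/2$; $\mathbb E[\hat A_{t,i}-A_{t,i}\mid \mathcal S] > 0$ if $p_t>1/2$; and $\mathbb E[\hat A_{t,i}-A_{t,i}\mid \mathcal S] = 0$ if and only if $p_t=1/2$.
   Context: Setting: for a prompt, $G$ responses are sampled independently from a policy; each response gets a binary reward, modeled as i.i.d. Bernoulli with success probability $p_t$ (the expected reward). $\hat p_t$ is the group baseline, $\hat A_{t,i}$ the group-relative advantage, $A_{t,i}$ the expected advantage, and $\mathcal S$ the non-degenerate event that the group is neither all-correct nor all-incorrect. *)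

theory Defs
  imports "HOL-Probability.Probability"
begin

text \<open>Joint law of the G i.i.d. Bernoulli(p) rewards r_1..r_G, as a pmf on
  outcomes \<omega> :: nat \<Rightarrow> bool (\<omega> j = True means response j is correct).\<close>
definition rewards_pmf :: "nat \<Rightarrow> real \<Rightarrow> (nat \<Rightarrow> bool) pmf" where
  "rewards_pmf G p = Pi_pmf {1..G} False (\<lambda>_. bernoulli_pmf p)"

definition reward :: "(nat \<Rightarrow> bool) \<Rightarrow> nat \<Rightarrow> real" where
  "reward \<omega> j = (if \<omega> j then 1 else 0)"

definition Rsum :: "nat \<Rightarrow> (nat \<Rightarrow> bool) \<Rightarrow> real" where
  "Rsum G \<omega> = (\<Sum>j=1..G. reward \<omega> j)"

definition phat :: "nat \<Rightarrow> (nat \<Rightarrow> bool) \<Rightarrow> real" where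
  "phat G \<omega> = Rsum G \<omega> / real G"

definition Ahat :: "nat \<Rightarrow> nat \<Rightarrow> (nat \<Rightarrow> bool) \<Rightarrow> real" where
  "Ahat G i \<omega> = reward \<omega> i - phat G \<omega>"

definition Aexp :: "real \<Rightarrow> nat \<Rightarrow> (nat \<Rightarrow> bool) \<Rightarrow> real" where
  "Aexp p i \<omega> = reward \<omega> i - p"

definition nondeg :: "nat \<Rightarrow> (nat \<Rightarrow> bool) set" where
  "nondeg G = {\<omega>. 1 \<le> Rsum G \<omega> \<and> Rsum G \<omega> \<le> real G - 1}"

definition cond_expect :: "'a pmf \<Rightarrow> 'a set \<Rightarrow> ('a \<Rightarrow> real) \<Rightarrow> real" where
  "cond_expect M S X = measure_pmf.expectation (cond_pmf M S) X"

end

theory Submission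
  imports Defs
begin

lemma Rsum_card: "Rsum G \<omega> = real (card {j\<in>{1..G}. \<omega> j})"
  unfolding Rsum_def reward_def by (simp add: sum.If_cases Int_def conj_commute)

lemma cond_expect_finite:
  fixes M :: "'a pmf"
  assumes fin: "finite A" and sub: "set_pmf M \<subseteq> A" and ne: "set_pmf M \<inter> S \<noteq> {}"
  shows "cond_expect M S X = measure_pmf.expectation M (\<lambda>x. X x * indicator S x) / measure_pmf.prob M S"
proof -
  have "cond_expect M S X = (\<Sum>a\<in>A. X a * pmf (cond_pmf M S) a)"
    unfolding cond_expect_def
    by (rule integral_measure_pmf_real[OF fin]) (use sub ne in auto)
  also have "\<dots> = (\<Sum>a\<in>A. X a * indicator S a * pmf M a) / measure_pmf.prob M S"
    by (simp add: pmf_cond[OF ne] sum_divide_distrib indicator_def) (intro sum.cong, auto)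
  also have "(\<Sum>a\<in>A. X a * indicator S a * pmf M a) = measure_pmf.expectation M (\<lambda>x. X x * indicator S x)"
    by (rule integral_measure_pmf_real[OF fin, symmetric]) (use sub in auto)
  finally show ?thesis .
qed

lemma expect_point:
  fixes M :: "'a pmf"
  shows "measure_pmf.expectation M (\<lambda>x. f x * indicator {a} x) = f a * pmf M a"
  by (subst integral_measure_pmf_real[where A="{a}"]) (auto simp: indicator_def split: if_splits)

theorem theorem1:
  fixes G :: nat and p :: real and i :: nat
  assumes "G \<ge> 2" and "0 < p" and "p < 1" and "i \<in> {1..G}"
  shows "(p < 1/2 \<longrightarrow>
            cond_expect (rewards_pmf G p) (nondeg G) (\<lambda>\<omega>. Ahat G i \<omega> - Aexp p i \<omega>) < 0)
       \<and> (p > 1/2 \<longrightarrow>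
            cond_expect (rewards_pmf G p) (nondeg G) (\<lambda>\<omega>. Ahat G i \<omega> - Aexp p i \<omega>) > 0)
       \<and> (cond_expect (rewards_pmf G p) (nondeg G) (\<lambda>\<omega>. Ahat G i \<omega> - Aexp p i \<omega>) = 0
            \<longleftrightarrow> p = 1/2)"
proof -
  define M where "M = rewards_pmf G p"
  define A :: "nat set" where "A = {1..G}"
  define \<Omega> where "\<Omega> = PiE_dflt A False (\<lambda>_. UNIV :: bool set)"
  define X where "X = (\<lambda>\<omega>. Ahat G i \<omega> - Aexp p i \<omega>)"
  define S where "S = nondeg G"
  define w0 :: "nat \<Rightarrow> bool" where "w0 = (\<lambda>_. False)"
  define w1 :: "nat \<Rightarrow> bool" where "w1 = (\<lambda>j. j \<in> A)"
  define w2 :: "nat \<Rightarrow> bool" where "w2 = (\<lambda>j. j = 1)"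
  have finA: "finite A" and cardA: "card A = G" unfolding A_def by auto
  have fin: "finite \<Omega>" unfolding \<Omega>_def using finA by auto
  have setM: "set_pmf M = \<Omega>"
    unfolding M_def rewards_pmf_def \<Omega>_def A_def[symmetric] using assms(2,3)
    by (subst set_Pi_pmf[OF finA]) (simp add: o_def)
  have memO: "\<omega> \<in> \<Omega> \<longleftrightarrow> (\<forall>x. x \<notin> A \<longrightarrow> \<omega> x = False)" for \<omega>
    unfolding \<Omega>_def PiE_dflt_def by auto
  have X_eq: "X \<omega> = p - Rsum G \<omega> / real G" for \<omega>
    unfolding X_def Ahat_def Aexp_def phat_def by simp
  have Gpos: "real G > 0" using assms(1) by simp
  have keyS: "\<omega> \<notin> S \<longleftrightarrow> \<omega> = w0 \<or> \<omega> = w1" if "\<omega> \<in> \<Omega>" for \<omega>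
  proof -
    let ?C = "{j\<in>A. \<omega> j}"
    have CA: "?C \<subseteq> A" by auto
    have cC: "card ?C \<le> G" using card_mono[OF finA CA] cardA by simp
    have "\<omega> \<notin> S \<longleftrightarrow> card ?C = 0 \<or> card ?C = G"
      unfolding S_def nondeg_def Rsum_card A_def[symmetric] using cC assms(1) by auto
    also have "card ?C = 0 \<longleftrightarrow> ?C = {}" using finA by simp
    also have "card ?C = G \<longleftrightarrow> ?C = A" using card_subset_eq[OF finA CA] cardA by auto
    also have "(?C = {} \<or> ?C = A) \<longleftrightarrow> \<omega> = w0 \<or> \<omega> = w1"
      using that unfolding memO w0_def w1_def by (auto simp: fun_eq_iff)
    finally show ?thesis .
  qed
  have w0O: "w0 \<in> \<Omega>" and w1O: "w1 \<in> \<Omega>" and w2O: "w2 \<in> \<Omega>"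
    using assms(1) unfolding memO w0_def w1_def w2_def A_def by auto
  have w2S: "w2 \<in> S"
  proof -
    have "{j\<in>{1..G}. w2 j} = {1}" using assms(1) unfolding w2_def by auto
    then show ?thesis unfolding S_def nondeg_def Rsum_card using assms(1) by auto
  qed
  have ne: "set_pmf M \<inter> S \<noteq> {}" using w2O w2S setM by auto
  have pw0: "pmf M w0 = (1 - p) ^ G"
    unfolding M_def rewards_pmf_def using assms(2,3) finA cardA
    by (subst pmf_Pi') (auto simp: w0_def A_def)
  have pw1: "pmf M w1 = p ^ G"
    unfolding M_def rewards_pmf_def using assms(2,3) finA cardA
    by (subst pmf_Pi') (auto simp: w1_def A_def)
  have int: "integrable M f" for f :: "_ \<Rightarrow> real"
    using fin setM by (intro integrable_measure_pmf_finite) auto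
  have ER: "measure_pmf.expectation M (\<lambda>\<omega>. reward \<omega> j) = p" if "j \<in> A" for j
  proof -
    have "measure_pmf.expectation M (\<lambda>\<omega>. reward \<omega> j)
        = measure_pmf.expectation (map_pmf (\<lambda>f. f j) M) (\<lambda>b. if b then 1 else 0)"
      by (simp add: reward_def)
    also have "map_pmf (\<lambda>f. f j) M = bernoulli_pmf p"
      unfolding M_def rewards_pmf_def A_def[symmetric] using that by (subst Pi_pmf_component[OF finA]) simp
    finally show ?thesis using assms(2,3) by simp
  qed
  have ERsum: "measure_pmf.expectation M (Rsum G) = real G * p"
  proof -
    have "measure_pmf.expectation M (Rsum G) = (\<Sum>j\<in>A. measure_pmf.expectation M (\<lambda>\<omega>. reward \<omega> j))"
      unfolding Rsum_def A_def[symmetric] by (rule Bochner_Integration.integral_sum) (use int in auto)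
    also have "\<dots> = (\<Sum>j\<in>A. p)" using ER by simp
    finally show ?thesis using cardA by simp
  qed
  have gen: "measure_pmf.expectation M (\<lambda>x. f x * indicator S x)
      = measure_pmf.expectation M f - f w0 * (1-p)^G - f w1 * p^G" for f
  proof -
    have w01: "w0 \<noteq> w1" using assms(1) unfolding w0_def w1_def A_def by (auto simp: fun_eq_iff)
    have "measure_pmf.expectation M (\<lambda>x. f x * indicator S x)
       = measure_pmf.expectation M (\<lambda>x. f x - f x * indicator {w0} x - f x * indicator {w1} x)"
    proof (intro integral_cong_AE)
      show "AE x in M. f x * indicator S x = f x - f x * indicator {w0} x - f x * indicator {w1} x"
        unfolding AE_measure_pmf_iff setM
        using keyS w01 by (auto split: split_indicator)
    qed auto
    also have "\<dots> = measure_pmf.expectation M f - measure_pmf.expectation M (\<lambda>x. f x * indicator {w0} x)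
          - measure_pmf.expectation M (\<lambda>x. f x * indicator {w1} x)"
      using int by simp
    finally show ?thesis by (simp only: expect_point pw0 pw1)
  qed
  have PS: "measure_pmf.prob M S = 1 - (1-p)^G - p^G"
  proof -
    have "measure_pmf.prob M S = measure_pmf.expectation M (\<lambda>x. 1 * indicator S x)" by simp
    also have "\<dots> = 1 - (1-p)^G - p^G" using gen[of "\<lambda>_. 1"] by simp
    finally show ?thesis .
  qed
  have PSpos: "measure_pmf.prob M S > 0" using measure_pmf_posI[of w2 M S] w2O w2S setM by auto
  have EX: "measure_pmf.expectation M X = 0"
    unfolding X_eq using int ERsum Gpos by simp
  have Xw0: "X w0 = p" unfolding X_eq Rsum_def reward_def w0_def by simp
  have Xw1: "X w1 = p - 1"
  proof -
    have "{j\<in>{1..G}. w1 j} = A" unfolding w1_def A_def by auto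
    then show ?thesis unfolding X_eq Rsum_card using cardA Gpos by simp
  qed
  have CE: "cond_expect M S X = p * (1-p) * (p^(G-1) - (1-p)^(G-1)) / measure_pmf.prob M S"
  proof -
    have "cond_expect M S X = (0 - p * (1-p)^G - (p-1) * p^G) / measure_pmf.prob M S"
      using cond_expect_finite[OF fin, of M S X] setM ne gen[of X] EX Xw0 Xw1 by simp
    also have "0 - p * (1-p)^G - (p-1) * p^G = p * (1-p) * (p^(G-1) - (1-p)^(G-1))"
    proof -
      have "G = Suc (G-1)" using assms(1) by simp
      then obtain k where k: "G = Suc k" "G - 1 = k" by blast
      show ?thesis unfolding k by (simp add: algebra_simps)
    qed
    finally show ?thesis .
  qed
  have pq: "p * (1-p) > 0" using assms(2,3) by simp
  have G1: "G - 1 \<noteq> 0" using assms(1) by simp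
  have lt: "p < 1/2 \<Longrightarrow> p^(G-1) < (1-p)^(G-1)"
    using assms(2) G1 by (intro power_strict_mono) auto
  have gt: "p > 1/2 \<Longrightarrow> p^(G-1) > (1-p)^(G-1)"
    using assms(3) G1 by (intro power_strict_mono) auto
  have c1: "p < 1/2 \<Longrightarrow> cond_expect M S X < 0"
    unfolding CE using lt pq PSpos assms(2,3) by (intro divide_neg_pos mult_pos_neg) auto
  have c2: "p > 1/2 \<Longrightarrow> cond_expect M S X > 0"
    unfolding CE using gt pq PSpos assms(2,3) by (intro divide_pos_pos mult_pos_pos) auto
  have c3: "cond_expect M S X = 0 \<longleftrightarrow> p = 1/2"
  proof (cases "p = 1/2")
    case True
    then have "1 - p = p" by simp
    then show ?thesis unfolding CE using True by (simp only:) simp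
  next
    case False
    then show ?thesis using c1 c2 by (cases "p < 1/2") auto
  qed
  show ?thesis using c1 c2 c3 unfolding M_def S_def X_def by blast
qed

end
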